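(* Let $s\ge 0$ and $d\ge1$, and let $(\delta_1,\ldots,\delta_s,\delta_{s+1})$ and $(e_1,\ldots,e_s)$ be sequences of integers with $\delta_i\neq e_j$ for all $i,j$, satisfying $0<\delta_1\le\cdots\le\delta_s\le\delta_{s+1}=d$, $0\le e_1\le\cdots\le e_s<d$, and $e_j<\delta_j$ for $1\le j\le s$. Let $n=\sum_{j=1}^{s+1}\delta_j-\sum_{j=1}^{s}e_j$. Then there is a forest $\Delta$ on $[n]$ of dimension $d-1$ whose $f$-vector $(f_0,\ldots,f_{d-1})$ satisfies $$\sum_{i=0}^{d} f_{i-1}x^i=\sum_{j=1}^{s+1}(1+x)^{\delta_j}-\sum_{j=1}^{s}(1+x)^{e_j},$$ where $f_{-1}=1$.
   Context: A simplicial complex $\Delta$ on $[n]$ is a collection of subsets of $[n]$ containing all singletons $\{i\}$, $i\in[n]$, and closed under taking subsets; $\dim\Delta=d-1$ where $d$ is the maximal face size; facets are maximal faces; $f_i$ is the number of faces with $i+1$ elements. For facets $F_{i_1},\ldots,F_{i_q}$, $\langle F_{i_1},\ldots,F_{i_q}\rangle$ is the subcomplex of all faces contained in some $F_{i_j}$. A facet $F$ of a complex is a leaf if there is another facet $G\neq F$ with $H\cap F\subset G\cap F$ for all facets $H\neq F$ (a complex with a single facet is regarded as having that facet as a leaf). A forest is a simplicial complex such that for every nonempty subset $\{F_{i_1},\ldots,F_{i_q}\}$ of its facets, $\langle F_{i_1},\ldots,F_{i_q}\rangle$ has a leaf. *)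

theory Defs
  imports "HOL-Computational_Algebra.Polynomial"
begin

definition simplicial_complex :: "nat \<Rightarrow> nat set set \<Rightarrow> bool" where
  "simplicial_complex n \<Delta> \<longleftrightarrow>
     (\<forall>F\<in>\<Delta>. F \<subseteq> {1..n}) \<and> (\<forall>i\<in>{1..n}. {i} \<in> \<Delta>) \<and> (\<forall>F\<in>\<Delta>. \<forall>G. G \<subseteq> F \<longrightarrow> G \<in> \<Delta>)"

text \<open>Maximal face size d; the dimension is d - 1.\<close>
definition max_face_size :: "nat set set \<Rightarrow> nat" where
  "max_face_size \<Delta> = Max (card ` \<Delta>)"

definition facets :: "nat set set \<Rightarrow> nat set set" where
  "facets \<Delta> = {F \<in> \<Delta>. \<forall>G\<in>\<Delta>. F \<subseteq> G \<longrightarrow> G = F}"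

definition generated :: "nat set set \<Rightarrow> nat set set" where
  "generated S = {G. \<exists>F\<in>S. G \<subseteq> F}"

definition is_leaf :: "nat set set \<Rightarrow> nat set \<Rightarrow> bool" where
  "is_leaf \<Delta> F \<longleftrightarrow> F \<in> facets \<Delta> \<and>
     (facets \<Delta> = {F} \<or>
      (\<exists>G\<in>facets \<Delta>. G \<noteq> F \<and> (\<forall>H\<in>facets \<Delta>. H \<noteq> F \<longrightarrow> H \<inter> F \<subseteq> G \<inter> F)))"

definition forest :: "nat \<Rightarrow> nat set set \<Rightarrow> bool" where
  "forest n \<Delta> \<longleftrightarrow> simplicial_complex n \<Delta> \<and>
     (\<forall>S. S \<subseteq> facets \<Delta> \<longrightarrow> S \<noteq> {} \<longrightarrow> (\<exists>F. is_leaf (generated S) F))"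

text \<open>Number of faces with k elements; fnum \<Delta> (i+1) = f_i, and fnum \<Delta> 0 = f_{-1} = 1.\<close>
definition fnum :: "nat set set \<Rightarrow> nat \<Rightarrow> nat" where
  "fnum \<Delta> k = card {F \<in> \<Delta>. card F = k}"

end

theory Submission
  imports Defs
begin

definition gp :: "nat set set \<Rightarrow> int poly" where
  "gp A = (\<Sum>G\<in>A. [:0,1:] ^ card G)"

lemma gp_Pow: "finite X \<Longrightarrow> gp (Pow X) = [:1,1:] ^ card X"
proof (induction X rule: finite_induct)
  case empty
  then show ?case by (simp add: gp_def)
next
  case (insert x X)
  have disj: "Pow X \<inter> insert x ` Pow X = {}" using insert by auto
  have inj: "inj_on (insert x) (Pow X)" using insert(2) unfolding inj_on_def by (metis Diff_insert_absorb PowD subsetD)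
  have fin: "finite (Pow X)" using insert by simp
  have "gp (Pow (insert x X)) = gp (Pow X) + (\<Sum>G\<in>insert x ` Pow X. [:0,1:] ^ card G)"
    unfolding gp_def Pow_insert using disj fin by (simp add: sum.union_disjoint)
  also have "(\<Sum>G\<in>insert x ` Pow X. [:0,1:] ^ card G) = (\<Sum>G\<in>Pow X. [:0,1:] ^ card (insert x G))"
    using inj by (simp add: sum.reindex)
  also have "\<dots> = (\<Sum>G\<in>Pow X. [:0,1::int:] * [:0,1:] ^ card G)"
  proof (rule sum.cong)
    fix G assume "G \<in> Pow X"
    then have "finite G" "x \<notin> G" using insert finite_subset by auto
    then show "[:0, 1:] ^ card (insert x G) = [:0,1::int:] * [:0, 1:] ^ card G" by simp
  qed simp
  also have "\<dots> = [:0,1:] * gp (Pow X)" unfolding gp_def by (simp add: sum_distrib_left)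
  finally show ?case using insert by (simp add: algebra_simps)
qed

lemma gp_fnum:
  assumes "finite A" "\<forall>G\<in>A. card G \<le> d"
  shows "(\<Sum>i\<le>d. monom (int (fnum A i)) i) = gp A"
proof -
  have "gp A = (\<Sum>i\<le>d. \<Sum>G\<in>{G\<in>A. card G = i}. [:0,1:] ^ card G)"
    unfolding gp_def using assms by (subst sum.group[symmetric, where g=card and T="{..d}"]) auto
  also have "\<dots> = (\<Sum>i\<le>d. monom (int (fnum A i)) i)"
  proof (rule sum.cong)
    fix i assume "i \<in> {..d}"
    have "(\<Sum>G\<in>{G\<in>A. card G = i}. [:0,1::int:] ^ card G) = (\<Sum>G\<in>{G\<in>A. card G = i}. [:0,1::int:] ^ i)"
      by simp
    also have "\<dots> = of_nat (fnum A i) * [:0,1:] ^ i" by (simp add: fnum_def)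
    also have "\<dots> = monom (int (fnum A i)) i" by (simp add: monom_altdef of_nat_poly)
    finally show "(\<Sum>G\<in>{G\<in>A. card G = i}. [:0,1::int:] ^ card G) = monom (int (fnum A i)) i" .
  qed simp
  finally show ?thesis by simp
qed

lemma facets_Pow:
  assumes "finite T" "\<forall>A\<in>T. \<forall>B\<in>T. A \<subseteq> B \<longrightarrow> A = B"
  shows "facets (\<Union>A\<in>T. Pow A) = T"
proof
  show "facets (\<Union>A\<in>T. Pow A) \<subseteq> T"
  proof
    fix F assume "F \<in> facets (\<Union>A\<in>T. Pow A)"
    then obtain A where "A \<in> T" "F \<subseteq> A" and m: "\<forall>G\<in>(\<Union>A\<in>T. Pow A). F \<subseteq> G \<longrightarrow> G = F"
      unfolding facets_def by auto
    have "A \<in> (\<Union>A\<in>T. Pow A)" using \<open>A \<in> T\<close> by blast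
    then have "A = F" by (rule m[rule_format]) fact
    then show "F \<in> T" using \<open>A \<in> T\<close> by simp
  qed
  show "T \<subseteq> facets (\<Union>A\<in>T. Pow A)"
  proof
    fix F assume F: "F \<in> T"
    have "\<forall>G\<in>(\<Union>A\<in>T. Pow A). F \<subseteq> G \<longrightarrow> G = F"
    proof (intro ballI impI)
      fix G assume "G \<in> (\<Union>A\<in>T. Pow A)" "F \<subseteq> G"
      then obtain B where "B \<in> T" "G \<subseteq> B" by auto
      then have "F \<subseteq> B" using \<open>F \<subseteq> G\<close> by (rule_tac subset_trans)
      then have "F = B" using assms(2) F \<open>B \<in> T\<close> by simp
      then show "G = F" using \<open>G \<subseteq> B\<close> \<open>F \<subseteq> G\<close> by blast
    qed
    then show "F \<in> facets (\<Union>A\<in>T. Pow A)" unfolding facets_def using F by auto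
  qed
qed

lemma generated_eq: "generated S = (\<Union>A\<in>S. Pow A)"
  unfolding generated_def by auto


locale cons =
  fixes m d :: nat and D E :: "nat \<Rightarrow> nat"
  assumes m1: "m \<ge> 1"
  and ED: "\<forall>j\<in>{1..m}. E j < D j"
  and Emono: "\<forall>j\<in>{1..<m}. E j \<le> E (Suc j)"
  and Dle: "\<forall>j\<in>{1..m}. D j \<le> d" and Dm: "D m = d"
begin

definition c where "c = E m"
definition off where "off j = c + (\<Sum>i=1..<j. D i - E i)"
definition F where "F j = {1..E j} \<union> {off j<..off (Suc j)}"
definition N where "N = off (Suc m)"

lemma off_mono: "i \<le> j \<Longrightarrow> off i \<le> off j"
  unfolding off_def by (auto intro!: sum_mono2)

lemma off1: "off 1 = c" unfolding off_def by simp

lemma off_Suc: "1 \<le> j \<Longrightarrow> off (Suc j) = off j + (D j - E j)"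
  unfolding off_def by (simp add: sum.atLeastLessThan_Suc)

lemma off_lt: "j \<in> {1..m} \<Longrightarrow> off j < off (Suc j)"
  using ED off_Suc by auto

lemma E_mono: assumes "1 \<le> i" "i \<le> j" "j \<le> m" shows "E i \<le> E j"
  using assms(2,3) proof (induction j rule: dec_induct)
  case base then show ?case by simp
next
  case (step k)
  then have "E k \<le> E (Suc k)" using Emono assms(1) by auto
  with step show ?case by simp
qed

lemma E_le_c: "j \<in> {1..m} \<Longrightarrow> E j \<le> c"
  unfolding c_def using E_mono by auto

lemma c_le_off: "1 \<le> j \<Longrightarrow> c \<le> off j"
  using off_mono off1 by metis

lemma fresh_disj:
  assumes "i \<in> {1..m}" "j \<in> {1..m}" "x \<in> {off i<..off (Suc i)}" "x \<in> {off j<..off (Suc j)}"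
  shows "i = j"
proof (rule ccontr)
  assume "i \<noteq> j"
  then consider "Suc i \<le> j" | "Suc j \<le> i" by linarith
  then show False
  proof cases
    case 1 then have "off (Suc i) \<le> off j" by (rule off_mono)
    then show False using assms by auto
  next
    case 2 then have "off (Suc j) \<le> off i" by (rule off_mono)
    then show False using assms by auto
  qed
qed

lemma F_inter:
  assumes "i \<in> {1..m}" "j \<in> {1..m}" "i \<noteq> j"
  shows "F i \<inter> F j = {1..min (E i) (E j)}"
proof
  show "F i \<inter> F j \<subseteq> {1..min (E i) (E j)}"
  proof
    fix x assume x: "x \<in> F i \<inter> F j"
    show "x \<in> {1..min (E i) (E j)}"
    proof (cases "x \<le> c")
      case True
      have "c \<le> off i" "c \<le> off j" using assms c_le_off by auto
      then show ?thesis using x True unfolding F_def by auto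
    next
      case False
      have "E i \<le> c" "E j \<le> c" using assms E_le_c by auto
      then have "x \<in> {off i<..off (Suc i)}" "x \<in> {off j<..off (Suc j)}"
        using x False unfolding F_def by auto
      then show ?thesis using fresh_disj assms by blast
    qed
  qed
  show "{1..min (E i) (E j)} \<subseteq> F i \<inter> F j" unfolding F_def by auto
qed

lemma F_sub:
  assumes "i \<in> {1..m}" "j \<in> {1..m}" "F i \<subseteq> F j"
  shows "i = j"
proof -
  have x: "Suc (off i) \<in> F i" using off_lt[OF assms(1)] unfolding F_def by auto
  have "c \<le> off i" using assms c_le_off by auto
  moreover have "E j \<le> c" using assms E_le_c by auto
  moreover have "Suc (off i) \<in> F j" using x assms(3) by blast
  ultimately have "Suc (off i) \<in> {off j<..off (Suc j)}" unfolding F_def by auto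
  moreover have "Suc (off i) \<in> {off i<..off (Suc i)}" using off_lt[OF assms(1)] by auto
  ultimately show ?thesis using fresh_disj assms by blast
qed

lemma F_card: "j \<in> {1..m} \<Longrightarrow> card (F j) = D j"
proof -
  assume j: "j \<in> {1..m}"
  have "c \<le> off j" "E j \<le> c" using j c_le_off E_le_c by auto
  then have "card (F j) = E j + (off (Suc j) - off j)"
    unfolding F_def by (subst card_Un_disjoint) auto
  also have "\<dots> = D j" using off_Suc[of j] j ED[rule_format, OF j] by auto
  finally show ?thesis .
qed

lemma F_fin: "finite (F j)" unfolding F_def by auto

lemma F_range: "j \<in> {1..m} \<Longrightarrow> F j \<subseteq> {1..N}"
proof -
  assume j: "j \<in> {1..m}"
  have "c \<le> N" "E j \<le> c" "off (Suc j) \<le> N" using j c_le_off E_le_c off_mono unfolding N_def by auto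
  then show ?thesis unfolding F_def by auto
qed

lemma cover_aux: "off 1 < i \<Longrightarrow> i \<le> off (Suc k) \<Longrightarrow> \<exists>j\<in>{1..k}. i \<in> {off j<..off (Suc j)}"
proof (induction k)
  case 0 then show ?case by simp
next
  case (Suc k)
  show ?case
  proof (cases "i \<le> off (Suc k)")
    case True then show ?thesis using Suc by force
  next
    case False then show ?thesis using Suc by (intro bexI[of _ "Suc k"]) auto
  qed
qed

lemma cover: "i \<in> {1..N} \<Longrightarrow> \<exists>j\<in>{1..m}. i \<in> F j"
proof -
  assume i: "i \<in> {1..N}"
  show ?thesis
  proof (cases "i \<le> c")
    case True then show ?thesis using i m1 unfolding F_def c_def by force
  next
    case False
    then obtain j where "j \<in> {1..m}" "i \<in> {off j<..off (Suc j)}"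
      using cover_aux[of i m] i off1 unfolding N_def by auto
    then show ?thesis unfolding F_def by blast
  qed
qed


definition Dk where "Dk k = (\<Union>j\<in>{1..k}. Pow (F j))"

lemma Dk_fin: "finite (Dk k)" unfolding Dk_def using F_fin by auto

lemma F_anti: "\<forall>A\<in>F ` {1..m}. \<forall>B\<in>F ` {1..m}. A \<subseteq> B \<longrightarrow> A = B"
proof (intro ballI impI)
  fix A B assume "A \<in> F ` {1..m}" "B \<in> F ` {1..m}" "A \<subseteq> B"
  then obtain i j where "i \<in> {1..m}" "j \<in> {1..m}" "A = F i" "B = F j" by blast
  then show "A = B" using F_sub \<open>A \<subseteq> B\<close> by blast
qed

lemma facets_Dm: "facets (Dk m) = F ` {1..m}"
proof -
  have "facets (\<Union>A\<in>F ` {1..m}. Pow A) = F ` {1..m}"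
    by (rule facets_Pow) (use F_anti in auto)
  then show ?thesis unfolding Dk_def by simp
qed

lemma Dk_inter:
  assumes "1 \<le> k" "Suc k \<le> m"
  shows "Dk k \<inter> Pow (F (Suc k)) = Pow {1..E k}"
proof
  show "Dk k \<inter> Pow (F (Suc k)) \<subseteq> Pow {1..E k}"
  proof
    fix G assume "G \<in> Dk k \<inter> Pow (F (Suc k))"
    then obtain j where j: "j \<in> {1..k}" "G \<subseteq> F j" "G \<subseteq> F (Suc k)" unfolding Dk_def by auto
    then have "G \<subseteq> F j \<inter> F (Suc k)" by blast
    also have "\<dots> = {1..min (E j) (E (Suc k))}" using j assms by (intro F_inter) auto
    also have "\<dots> \<subseteq> {1..E k}" using E_mono[of j k] j assms by auto
    finally show "G \<in> Pow {1..E k}" by simp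
  qed
  have "E k \<le> E (Suc k)" using Emono assms by auto
  then have "{1..E k} \<subseteq> F k" "{1..E k} \<subseteq> F (Suc k)" unfolding F_def by auto
  moreover have "Pow (F k) \<subseteq> Dk k" unfolding Dk_def using assms by auto
  ultimately show "Pow {1..E k} \<subseteq> Dk k \<inter> Pow (F (Suc k))" by blast
qed

lemma gp_Dk:
  assumes "1 \<le> k" "k \<le> m"
  shows "gp (Dk k) = (\<Sum>j=1..k. [:1,1:] ^ D j) - (\<Sum>j=1..<k. [:1,1:] ^ E j)"
  using assms(1,2)
proof (induction k rule: dec_induct)
  case base
  have "Dk 1 = Pow (F 1)" unfolding Dk_def by simp
  then show ?case using gp_Pow[OF F_fin[of 1]] F_card[of 1] m1 by simp
next
  case (step k)
  have k1: "1 \<le> k" using step by simp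
  have U: "Dk (Suc k) = Dk k \<union> Pow (F (Suc k))" unfolding Dk_def using k1
    by (auto simp: atLeastAtMostSuc_conv)
  have "gp (Dk (Suc k)) + gp (Dk k \<inter> Pow (F (Suc k))) = gp (Dk k) + gp (Pow (F (Suc k)))"
    unfolding U gp_def by (rule sum.union_inter) (use Dk_fin F_fin in auto)
  moreover have "gp (Dk k \<inter> Pow (F (Suc k))) = [:1,1:] ^ E k"
    using Dk_inter[OF k1] step gp_Pow[of "{1..E k}"] by simp
  moreover have "gp (Pow (F (Suc k))) = [:1,1:] ^ D (Suc k)"
    using gp_Pow[OF F_fin] F_card[of "Suc k"] step by simp
  ultimately have "gp (Dk (Suc k)) = gp (Dk k) + [:1,1:] ^ D (Suc k) - [:1,1:] ^ E k"
    by (simp add: algebra_simps)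
  then show ?case using step k1 by (simp add: sum.atLeastLessThan_Suc algebra_simps)
qed

lemma cplx: "simplicial_complex N (Dk m)"
  unfolding simplicial_complex_def
proof (intro conjI ballI allI impI)
  fix G assume "G \<in> Dk m"
  then show "G \<subseteq> {1..N}" unfolding Dk_def using F_range by blast
next
  fix i assume "i \<in> {1..N}"
  then show "{i} \<in> Dk m" using cover unfolding Dk_def by blast
next
  fix G H assume "G \<in> Dk m" "H \<subseteq> G"
  then show "H \<in> Dk m" unfolding Dk_def by blast
qed

lemma forest_Dm: "forest N (Dk m)"
  unfolding forest_def
proof (intro conjI cplx allI impI)
  fix S assume S: "S \<subseteq> facets (Dk m)" "S \<noteq> {}"
  then have S': "S \<subseteq> F ` {1..m}" using facets_Dm by simp
  have finS: "finite S" using S' finite_subset by blast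
  have fS: "facets (generated S) = S"
    unfolding generated_eq
  proof (rule facets_Pow[OF finS], intro ballI impI)
    fix A B assume "A \<in> S" "B \<in> S" "A \<subseteq> B"
    then show "A = B" using F_anti S' by (meson subsetD)
  qed
  define J where "J = {j\<in>{1..m}. F j \<in> S}"
  have finJ: "finite J" unfolding J_def by simp
  have J: "J \<noteq> {}" using S S' unfolding J_def by auto
  define j0 where "j0 = (SOME j. j \<in> J \<and> E j = Min (E ` J))"
  have "\<exists>j. j \<in> J \<and> E j = Min (E ` J)"
    using Min_in[of "E ` J"] finJ J by fastforce
  then have j0: "j0 \<in> J" "E j0 = Min (E ` J)" unfolding j0_def by (metis (mono_tags, lifting) someI_ex)+
  have j0min: "\<And>k. k \<in> J \<Longrightarrow> E j0 \<le> E k" using j0 finJ by simp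
  have j0m: "j0 \<in> {1..m}" "F j0 \<in> S" using j0 unfolding J_def by auto
  show "\<exists>F. is_leaf (generated S) F"
  proof (cases "S = {F j0}")
    case True then show ?thesis unfolding is_leaf_def fS by blast
  next
    case False
    then obtain G where G: "G \<in> S" "G \<noteq> F j0" using j0m by blast
    obtain g where g0: "g \<in> {1..m}" "G = F g" using G(1) S' by blast
    then have g: "g \<in> J" "G = F g" using G(1) unfolding J_def by auto
    have gne: "g \<noteq> j0" using g G by auto
    have "\<forall>H\<in>S. H \<noteq> F j0 \<longrightarrow> H \<inter> F j0 \<subseteq> G \<inter> F j0"
    proof (intro ballI impI)
      fix H assume H: "H \<in> S" "H \<noteq> F j0"
      obtain h where h0: "h \<in> {1..m}" "H = F h" using H(1) S' by blast
      then have h: "h \<in> J" "H = F h" using H(1) unfolding J_def by auto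
      have hne: "h \<noteq> j0" using h H by auto
      have "H \<inter> F j0 = {1..min (E h) (E j0)}" using F_inter[OF h0(1) j0m(1) hne] h0(2) by simp
      also have "\<dots> = {1..E j0}" using j0min[OF h(1)] by simp
      also have "\<dots> = {1..min (E g) (E j0)}" using j0min[OF g(1)] by simp
      also have "\<dots> = G \<inter> F j0" using F_inter[OF g0(1) j0m(1) gne] g0(2) by simp
      finally show "H \<inter> F j0 \<subseteq> G \<inter> F j0" by simp
    qed
    then have "is_leaf (generated S) (F j0)" unfolding is_leaf_def fS
    proof (intro conjI disjI2)
      show "F j0 \<in> S" by (rule j0m(2))
      show "\<exists>G\<in>S. G \<noteq> F j0 \<and> (\<forall>H\<in>S. H \<noteq> F j0 \<longrightarrow> H \<inter> F j0 \<subseteq> G \<inter> F j0)"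
        using G \<open>\<forall>H\<in>S. H \<noteq> F j0 \<longrightarrow> H \<inter> F j0 \<subseteq> G \<inter> F j0\<close> by blast
    qed
    then show ?thesis by blast
  qed
qed

lemma maxface: "max_face_size (Dk m) = d"
proof -
  have fin: "finite (card ` Dk m)" using Dk_fin by simp
  have le: "\<forall>x\<in>card ` Dk m. x \<le> d"
  proof
    fix x assume "x \<in> card ` Dk m"
    then obtain G j where "j \<in> {1..m}" "G \<subseteq> F j" "x = card G" unfolding Dk_def by auto
    then have "x \<le> card (F j)" using F_fin card_mono by blast
    then show "x \<le> d" using F_card Dle[rule_format, of j] \<open>j \<in> {1..m}\<close> by auto
  qed
  have "F m \<in> Dk m" unfolding Dk_def using m1 by auto
  then have "d \<in> card ` Dk m" using F_card[of m] m1 Dm by force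
  then show ?thesis unfolding max_face_size_def using fin le
    by (meson Max_eqI)
qed

lemma fpoly: "(\<Sum>i\<le>d. monom (int (fnum (Dk m) i)) i) =
   (\<Sum>j=1..m. [:1,1:] ^ D j) - (\<Sum>j=1..<m. [:1,1:] ^ E j)"
proof -
  have "\<forall>G\<in>Dk m. card G \<le> d"
  proof
    fix G assume "G \<in> Dk m"
    then obtain j where "j \<in> {1..m}" "G \<subseteq> F j" unfolding Dk_def by auto
    then have "card G \<le> card (F j)" using F_fin card_mono by blast
    then show "card G \<le> d" using F_card Dle[rule_format, of j] \<open>j \<in> {1..m}\<close> by auto
  qed
  then show ?thesis using gp_fnum[OF Dk_fin] gp_Dk[OF m1 order.refl] by simp
qed

end


theorem lemma2p3:
  fixes s d n :: nat and \<delta> e :: "nat \<Rightarrow> nat"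
  assumes "d \<ge> 1"
    and "\<forall>i\<in>{1..s+1}. \<forall>j\<in>{1..s}. \<delta> i \<noteq> e j"
    and "0 < \<delta> 1"
    and "\<forall>j\<in>{1..s}. \<delta> j \<le> \<delta> (j+1)"
    and "\<delta> (s+1) = d"
    and "\<forall>j\<in>{1..<s}. e j \<le> e (j+1)"
    and "\<forall>j\<in>{1..s}. e j < d"
    and "\<forall>j\<in>{1..s}. e j < \<delta> j"
    and "int n = (\<Sum>j=1..s+1. int (\<delta> j)) - (\<Sum>j=1..s. int (e j))"
  shows "\<exists>\<Delta>. forest n \<Delta> \<and> max_face_size \<Delta> = d \<and>
    (\<Sum>i\<le>d. monom (int (fnum \<Delta> i)) i) =
      (\<Sum>j=1..s+1. [:1, 1:] ^ \<delta> j) - (\<Sum>j=1..s. ([:1, 1:] :: int poly) ^ e j)"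
proof -
  define E where "E j = (if j \<le> s then e j else if s = 0 then 0 else e s)" for j
  have dmono: "\<delta> j \<le> \<delta> k" if "1 \<le> j" "j \<le> k" "k \<le> s+1" for j k
    using that(2,3)
  proof (induction k rule: dec_induct)
    case base then show ?case by simp
  next
    case (step k)
    then have "\<delta> k \<le> \<delta> (k+1)" using assms(4) that(1) by auto
    with step show ?case by simp
  qed
  have inst: "cons (s+1) d \<delta> E"
  proof
    show "1 \<le> s + 1" by simp
    show "\<forall>j\<in>{1..s + 1}. E j < \<delta> j"
    proof
      fix j assume j: "j \<in> {1..s+1}"
      show "E j < \<delta> j"
      proof (cases "j \<le> s")
        case True then show ?thesis using assms(8) j E_def by auto
      next
        case False then have "j = s+1" using j by auto
        then show ?thesis using assms(3,5,7) E_def by (cases "s = 0") auto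
      qed
    qed
    show "\<forall>j\<in>{1..<s + 1}. E j \<le> E (Suc j)"
    proof
      fix j assume j: "j \<in> {1..<s+1}"
      show "E j \<le> E (Suc j)"
      proof (cases "j < s")
        case True then show ?thesis using assms(6) j E_def by auto
      next
        case False then have "j = s" "s \<ge> 1" using j by auto
        then show ?thesis using E_def by auto
      qed
    qed
    show "\<forall>j\<in>{1..s + 1}. \<delta> j \<le> d" using dmono assms(5) by force
    show "\<delta> (s + 1) = d" by (rule assms(5))
  qed
  let ?N = "cons.N (s+1) \<delta> E"
  let ?D = "cons.Dk (s+1) \<delta> E (s+1)"
  have EN: "int ?N = int n"
  proof -
    have "?N = E (s+1) + (\<Sum>i=1..<s+2. \<delta> i - E i)"
      unfolding cons.N_def[OF inst] cons.off_def[OF inst] cons.c_def[OF inst] by simp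
    moreover have "int (\<Sum>i=1..<s+2. \<delta> i - E i) = (\<Sum>i=1..<s+2. int (\<delta> i) - int (E i))"
      unfolding of_nat_sum
    proof (rule sum.cong[OF refl])
      fix i assume "i \<in> {1..<s+2}"
      then have "E i < \<delta> i" using cons.ED[OF inst] by auto
      then show "int (\<delta> i - E i) = int (\<delta> i) - int (E i)" by simp
    qed
    ultimately have "int ?N = int (E (s+1)) + (\<Sum>i=1..<s+2. int (\<delta> i) - int (E i))"
      by simp
    also have "\<dots> = int (E (s+1)) + (\<Sum>i=1..s+1. int (\<delta> i)) - (\<Sum>i=1..s+1. int (E i))"
      by (simp add: sum_subtractf atLeastLessThanSuc_atLeastAtMost)
    also have "(\<Sum>i=1..s+1. int (E i)) = (\<Sum>i=1..s. int (E i)) + int (E (s+1))" by simp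
    also have "(\<Sum>i=1..s. int (E i)) = (\<Sum>i=1..s. int (e i))" by (rule sum.cong) (auto simp: E_def)
    finally show ?thesis using assms(9) by simp
  qed
  have "(\<Sum>j=1..<s+1. ([:1, 1:] :: int poly) ^ E j) = (\<Sum>j=1..s. [:1, 1:] ^ e j)"
    by (simp add: atLeastLessThanSuc_atLeastAtMost) (rule sum.cong, auto simp: E_def)
  then have P: "(\<Sum>i\<le>d. monom (int (fnum ?D i)) i) =
      (\<Sum>j=1..s+1. [:1, 1:] ^ \<delta> j) - (\<Sum>j=1..s. ([:1, 1:] :: int poly) ^ e j)"
    using cons.fpoly[OF inst] by simp
  have "n = ?N" using EN by simp
  then show ?thesis using cons.forest_Dm[OF inst] cons.maxface[OF inst] P by auto
qed

end
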